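(* Let $G$ be an elementary abelian $2$-group and let $T\subseteq G$ be a generating subset of $G$ with $0\in T$. Let $\mathcal{U}$ be the group with presentation $$\mathcal{U}=\big\langle (t^{\mathcal U})_{t\in T}\;\big|\;(t^{\mathcal U})^2=1,\ t^{\mathcal U}s^{\mathcal U}(t^{\mathcal U})^{-1}=(2t-s)^{\mathcal U}\text{ for all } s,t\in T\big\rangle,$$ and let $\mathcal{W}$ be the subgroup generated by $\{(0,t,-1)\mid t\in T\}$ of the group $(G\wedge G)\times G\times\{1,-1\}$ with multiplication $(l,g,v)(l',g',v')=(l+l'+g\wedge(vg'),\,g+vg',\,vv')$. Let $\mathcal U\to\mathcal W$ be the group homomorphism determined by $t^{\mathcal U}\mapsto(0,t,-1)$ for $t\in T$. Then this homomorphism is injective if and only if the set $T\setminus\{0\}$ is $2$-independent in $G$.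
   Context: Since $2s=0$ in $G$, the relation reads $t^{\mathcal U}s^{\mathcal U}(t^{\mathcal U})^{-1}=s^{\mathcal U}$. A subset $M$ of an abelian group $G$ (here an $\mathbb{F}_2$-vector space) is called 2-dependent if the elements of the set $\{g\otimes g\mid g\in M\}$ are linearly dependent in $G\otimes G$, and 2-independent if it is not 2-dependent. The homomorphism $\mathcal U\to\mathcal W$ exists since the elements $(0,t,-1)$ satisfy the defining relations of $\mathcal U$. *)

theory Defs
  imports "HOL-Algebra.Algebra"
begin

definition elementary_abelian_2 :: "'a::ab_group_add itself \<Rightarrow> bool" where
  "elementary_abelian_2 _ \<longleftrightarrow> (\<forall>x::'a. x + x = 0)"

inductive_set add_span :: "'a::ab_group_add set \<Rightarrow> 'a set" for T where
  zero: "0 \<in> add_span T"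
| gen: "t \<in> T \<Longrightarrow> t \<in> add_span T"
| add: "x \<in> add_span T \<Longrightarrow> y \<in> add_span T \<Longrightarrow> x + y \<in> add_span T"
| neg: "x \<in> add_span T \<Longrightarrow> - x \<in> add_span T"

abbreviation FA :: "('a \<times> 'a \<Rightarrow>\<^sub>0 int) monoid" where
  "FA \<equiv> free_Abelian_group UNIV"

definition tensor_rels :: "('a::ab_group_add \<times> 'a \<Rightarrow>\<^sub>0 int) set" where
  "tensor_rels =
     {frag_of (a + b, c) - frag_of (a, c) - frag_of (b, c) | a b c. True} \<union>
     {frag_of (a, b + c) - frag_of (a, b) - frag_of (a, c) | a b c. True}"

definition wedge_rels :: "('a::ab_group_add \<times> 'a \<Rightarrow>\<^sub>0 int) set" where
  "wedge_rels = tensor_rels \<union> {frag_of (g, g) | g. True}"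

text \<open>G \<otimes> G and G \<wedge> G as quotient groups of the free abelian group on G \<times> G.\<close>
definition tensor_grp :: "('a::ab_group_add \<times> 'a \<Rightarrow>\<^sub>0 int) set monoid" where
  "tensor_grp = FA Mod (generate FA tensor_rels)"

definition tensor_elt :: "'a::ab_group_add \<Rightarrow> 'a \<Rightarrow> ('a \<times> 'a \<Rightarrow>\<^sub>0 int) set" where
  "tensor_elt g h = generate FA tensor_rels #>\<^bsub>FA\<^esub> frag_of (g, h)"

definition wedge_grp :: "('a::ab_group_add \<times> 'a \<Rightarrow>\<^sub>0 int) set monoid" where
  "wedge_grp = FA Mod (generate FA wedge_rels)"

definition wedge_elt :: "'a::ab_group_add \<Rightarrow> 'a \<Rightarrow> ('a \<times> 'a \<Rightarrow>\<^sub>0 int) set" where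
  "wedge_elt g h = generate FA wedge_rels #>\<^bsub>FA\<^esub> frag_of (g, h)"

text \<open>M is 2-dependent iff the elements of {g \<otimes> g | g \<in> M} are linearly dependent
  in the F_2-vector space G \<otimes> G, i.e. some nonempty finite subset sums to 0.\<close>
definition two_dependent :: "'a::ab_group_add set \<Rightarrow> bool" where
  "two_dependent M \<longleftrightarrow>
     (\<exists>F. finite F \<and> F \<noteq> {} \<and> F \<subseteq> (\<lambda>g. tensor_elt g g) ` M \<and>
          finprod tensor_grp id F = \<one>\<^bsub>tensor_grp\<^esub>)"

definition two_independent :: "'a::ab_group_add set \<Rightarrow> bool" where
  "two_independent M \<longleftrightarrow> \<not> two_dependent M"

definition sact :: "int \<Rightarrow> 'a::ab_group_add \<Rightarrow> 'a" where
  "sact v g = (if v = 1 then g else - g)"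

definition amb_grp ::
  "(('a::ab_group_add \<times> 'a \<Rightarrow>\<^sub>0 int) set \<times> 'a \<times> int) monoid" where
  "amb_grp = \<lparr>carrier = carrier wedge_grp \<times> UNIV \<times> {1, -1},
     monoid.mult = (\<lambda>(l, g, v) (l', g', v').
               (l \<otimes>\<^bsub>wedge_grp\<^esub> l' \<otimes>\<^bsub>wedge_grp\<^esub> wedge_elt g (sact v g'),
                g + sact v g', v * v')),
     one = (\<one>\<^bsub>wedge_grp\<^esub>, 0, 1)\<rparr>"

definition W_gen :: "'a::ab_group_add \<Rightarrow> ('a \<times> 'a \<Rightarrow>\<^sub>0 int) set \<times> 'a \<times> int" where
  "W_gen t = (\<one>\<^bsub>wedge_grp\<^esub>, t, -1)"

definition W_grp :: "'a::ab_group_add set \<Rightarrow> (('a \<times> 'a \<Rightarrow>\<^sub>0 int) set \<times> 'a \<times> int) monoid" where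
  "W_grp T = subgroup_generated amb_grp (W_gen ` T)"

text \<open>Words in the generators t^U (t \<in> T) and their inverses: (t, True) stands for t^U,
  (t, False) for its inverse.\<close>

definition U_relators :: "'a::ab_group_add set \<Rightarrow> ('a \<times> bool) list set" where
  "U_relators T =
     {[(t, True), (t, True)] | t. t \<in> T} \<union>
     {[(t, True), (s, True), (t, False), (t + t - s, False)] | s t.
        s \<in> T \<and> t \<in> T \<and> t + t - s \<in> T}"

inductive_set U_eq :: "'a::ab_group_add set \<Rightarrow> (('a \<times> bool) list \<times> ('a \<times> bool) list) set"
  for T where
  refl: "set w \<subseteq> T \<times> UNIV \<Longrightarrow> (w, w) \<in> U_eq T"
| sym: "(w, w') \<in> U_eq T \<Longrightarrow> (w', w) \<in> U_eq T"
| trans: "(w, w') \<in> U_eq T \<Longrightarrow> (w', w'') \<in> U_eq T \<Longrightarrow> (w, w'') \<in> U_eq T"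
| cancel: "set u \<subseteq> T \<times> UNIV \<Longrightarrow> set v \<subseteq> T \<times> UNIV \<Longrightarrow> t \<in> T \<Longrightarrow>
           (u @ [(t, b), (t, \<not> b)] @ v, u @ v) \<in> U_eq T"
| relator: "set u \<subseteq> T \<times> UNIV \<Longrightarrow> set v \<subseteq> T \<times> UNIV \<Longrightarrow> r \<in> U_relators T \<Longrightarrow>
           (u @ r @ v, u @ v) \<in> U_eq T"

definition U_grp :: "'a::ab_group_add set \<Rightarrow> ('a \<times> bool) list set monoid" where
  "U_grp T = \<lparr>carrier = lists (T \<times> UNIV) // U_eq T,
     monoid.mult = (\<lambda>A B. \<Union>a\<in>A. \<Union>b\<in>B. U_eq T `` {a @ b}),
     one = U_eq T `` {[]}\<rparr>"

definition U_gen :: "'a::ab_group_add set \<Rightarrow> 'a \<Rightarrow> ('a \<times> bool) list set" where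
  "U_gen T t = U_eq T `` {[(t, True)]}"

end

theory Submission
  imports Defs "HOL-Library.Z2"
begin

abbreviation fo :: "'a \<Rightarrow> 'a \<Rightarrow> ('a \<times> 'a \<Rightarrow>\<^sub>0 int)" where
  "fo a b \<equiv> frag_of (a, b)"

abbreviation GEN :: "('a \<times> 'a \<Rightarrow>\<^sub>0 int) set \<Rightarrow> ('a \<times> 'a \<Rightarrow>\<^sub>0 int) set" where
  "GEN R \<equiv> generate FA R"

lemma FA_group: "group (FA :: ('a \<times> 'a \<Rightarrow>\<^sub>0 int) monoid)" by simp

lemma gen_subgroup: "subgroup (GEN R) FA"
  by (rule group.generate_is_subgroup[OF FA_group]) auto

lemma gen_zero[simp]: "0 \<in> GEN R"
  using generate.one[of FA R] by simp

lemma gen_incl: "r \<in> R \<Longrightarrow> r \<in> GEN R"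
  by (rule generate.incl)

lemma gen_add: "x \<in> GEN R \<Longrightarrow> y \<in> GEN R \<Longrightarrow> x + y \<in> GEN R"
  using generate.eng[of x FA R y] by simp

lemma gen_neg: "x \<in> GEN R \<Longrightarrow> - x \<in> GEN R"
  using subgroup.m_inv_closed[OF gen_subgroup, of x R] by simp

lemma gen_neg_iff[simp]: "- x \<in> GEN R \<longleftrightarrow> x \<in> GEN R"
  using gen_neg[of x R] gen_neg[of "-x" R] by auto

lemma gen_diff: "x \<in> GEN R \<Longrightarrow> y \<in> GEN R \<Longrightarrow> x - y \<in> GEN R"
  using gen_add[of x R "-y"] gen_neg[of y R] by simp

lemma gen_sum: "(\<And>i. i \<in> I \<Longrightarrow> f i \<in> GEN R) \<Longrightarrow> sum f I \<in> GEN R"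
  by (induction I rule: infinite_finite_induct) (auto intro: gen_add)

lemma gen_sum_list: "(\<And>x. x \<in> set xs \<Longrightarrow> f x \<in> GEN R) \<Longrightarrow> sum_list (map f xs) \<in> GEN R"
  by (induction xs) (auto intro: gen_add)

lemma gen_mono: assumes "x \<in> GEN R" "R \<subseteq> R'" shows "x \<in> GEN R'"
  using assms
proof (induction x rule: generate.induct)
  case one then show ?case by simp
next
  case (incl h) then show ?case by (auto intro: gen_incl)
next
  case (inv h) then show ?case by (auto intro: gen_incl)
next
  case (eng h1 h2) then show ?case using gen_add by auto
qed

lemma rcos_eq_iff:
  "(GEN R #>\<^bsub>FA\<^esub> x = GEN R #>\<^bsub>FA\<^esub> y) \<longleftrightarrow> x - y \<in> GEN R"
proof
  assume h: "GEN R #>\<^bsub>FA\<^esub> x = GEN R #>\<^bsub>FA\<^esub> y"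
  have "x \<in> GEN R #>\<^bsub>FA\<^esub> x" unfolding r_coset_def
    by (auto intro: bexI[of _ 0])
  then have "x \<in> GEN R #>\<^bsub>FA\<^esub> y" using h by simp
  then obtain h where "h \<in> GEN R" "x = h + y" unfolding r_coset_def by auto
  then show "x - y \<in> GEN R" by simp
next
  assume h: "x - y \<in> GEN R"
  show "GEN R #>\<^bsub>FA\<^esub> x = GEN R #>\<^bsub>FA\<^esub> y"
  proof (auto simp: r_coset_def)
    fix k assume "k \<in> GEN R"
    then show "\<exists>h\<in>GEN R. k + x = h + y"
      using h by (intro bexI[of _ "k + (x - y)"]) (auto intro: gen_add)
  next
    fix k assume "k \<in> GEN R"
    then show "\<exists>h\<in>GEN R. k + y = h + x"
      using h by (intro bexI[of _ "k - (x - y)"]) (auto intro: gen_diff)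
  qed
qed

lemma rcos_zero: "GEN R #>\<^bsub>FA\<^esub> 0 = GEN R"
  by (auto simp: r_coset_def)

lemma rcos_mult:
  "set_mult FA (GEN R #>\<^bsub>FA\<^esub> x) (GEN R #>\<^bsub>FA\<^esub> y) = GEN R #>\<^bsub>FA\<^esub> (x + y)"
proof (rule equalityI; rule subsetI)
  fix z assume "z \<in> set_mult FA (GEN R #>\<^bsub>FA\<^esub> x) (GEN R #>\<^bsub>FA\<^esub> y)"
  then obtain h k where hk: "h \<in> GEN R" "k \<in> GEN R" "z = (h + x) + (k + y)"
    by (auto simp: r_coset_def set_mult_def)
  then have "z = (h + k) + (x + y)" by (simp add: algebra_simps)
  with hk show "z \<in> GEN R #>\<^bsub>FA\<^esub> (x + y)"
    by (auto simp: r_coset_def intro!: bexI[of _ "h + k"] gen_add)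
next
  fix z assume "z \<in> GEN R #>\<^bsub>FA\<^esub> (x + y)"
  then obtain h where h: "h \<in> GEN R" "z = h + (x + y)"
    by (auto simp: r_coset_def)
  then have "z = (h + x) + (0 + y)" by (simp add: algebra_simps)
  moreover have "h + x \<in> GEN R #>\<^bsub>FA\<^esub> x" "0 + y \<in> GEN R #>\<^bsub>FA\<^esub> y"
    using h by (auto simp: r_coset_def)
  ultimately show "z \<in> set_mult FA (GEN R #>\<^bsub>FA\<^esub> x) (GEN R #>\<^bsub>FA\<^esub> y)"
    unfolding set_mult_def by (auto intro!: bexI)
qed

lemma rcos_in_carrier: "GEN R #>\<^bsub>FA\<^esub> x \<in> carrier (FA Mod GEN R)"
  by (auto simp: carrier_FactGroup)

lemma Mod_comm_group: "comm_group (FA Mod GEN R)"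
proof -
  have n: "GEN R \<lhd> FA"
    by (rule comm_group.subgroup_imp_normal[OF abelian_free_Abelian_group gen_subgroup])
  have g: "group (FA Mod GEN R)" by (rule normal.factorgroup_is_group[OF n])
  show ?thesis
  proof (rule group.group_comm_groupI[OF g])
    fix a b assume "a \<in> carrier (FA Mod GEN R)" "b \<in> carrier (FA Mod GEN R)"
    then obtain x y where "a = GEN R #>\<^bsub>FA\<^esub> x" "b = GEN R #>\<^bsub>FA\<^esub> y"
      by (auto simp: carrier_FactGroup)
    then show "a \<otimes>\<^bsub>FA Mod GEN R\<^esub> b = b \<otimes>\<^bsub>FA Mod GEN R\<^esub> a"
      by (simp add: rcos_mult add.commute)
  qed
qed

lemma finprod_Mod:
  assumes "finite A"
  shows "finprod (FA Mod GEN R) (\<lambda>g. GEN R #>\<^bsub>FA\<^esub> f g) A = GEN R #>\<^bsub>FA\<^esub> sum f A"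
  using assms
proof (induction A rule: finite_induct)
  case empty
  have cm: "comm_monoid (FA Mod GEN R)"
    using Mod_comm_group comm_group_def by blast
  then show ?case
    by (simp add: comm_monoid.finprod_empty rcos_zero)
next
  case (insert a A)
  have cm: "comm_monoid (FA Mod GEN R)"
    using Mod_comm_group comm_group_def by blast
  show ?case
    using insert comm_monoid.finprod_insert[OF cm insert(1,2)]
    by (simp add: rcos_in_carrier Pi_def rcos_mult)
qed


abbreviation NT :: "('a::ab_group_add \<times> 'a \<Rightarrow>\<^sub>0 int) set" where
  "NT \<equiv> GEN tensor_rels"
abbreviation NW :: "('a::ab_group_add \<times> 'a \<Rightarrow>\<^sub>0 int) set" where
  "NW \<equiv> GEN wedge_rels"

lemma gen_lin: "a \<in> GEN R \<Longrightarrow> b \<in> GEN R \<Longrightarrow> x = a + b \<Longrightarrow> x \<in> GEN R"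
  using gen_add by blast
lemma gen_lin3: "a \<in> GEN R \<Longrightarrow> b \<in> GEN R \<Longrightarrow> c \<in> GEN R \<Longrightarrow> x = a + b + c \<Longrightarrow> x \<in> GEN R"
  using gen_add by blast

lemma NT_l: "fo (a + b) c - fo a c - fo b c \<in> NT"
  by (rule gen_incl) (auto simp: tensor_rels_def)
lemma NT_r: "fo a (b + c) - fo a b - fo a c \<in> NT"
  unfolding tensor_rels_def by (rule gen_incl, rule UnI2) blast

lemma NT_NW: "x \<in> NT \<Longrightarrow> x \<in> NW"
  by (erule gen_mono) (auto simp: wedge_rels_def)

lemma NW_diag: "fo g g \<in> NW"
  by (rule gen_incl) (auto simp: wedge_rels_def)

lemma NT_zero_l: "fo (0::'a::ab_group_add) c \<in> NT"
proof -
  have "- (fo (0 + 0) c - fo 0 c - fo 0 c) \<in> NT" using NT_l gen_neg by blast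
  then show ?thesis by simp
qed
lemma NT_zero_r: "fo c (0::'a::ab_group_add) \<in> NT"
proof -
  have "- (fo c (0 + 0) - fo c 0 - fo c 0) \<in> NT" using NT_r gen_neg by blast
  then show ?thesis by simp
qed

lemma NT_sum_l: "fo (sum f I) c - sum (\<lambda>x. fo (f x) c) I \<in> NT"
proof (induction I rule: infinite_finite_induct)
  case (infinite A) then show ?case using NT_zero_l by simp
next
  case empty then show ?case using NT_zero_l by simp
next
  case (insert a A)
  have "fo (sum f (insert a A)) c - sum (\<lambda>x. fo (f x) c) (insert a A) =
        (fo (f a + sum f A) c - fo (f a) c - fo (sum f A) c) + (fo (sum f A) c - sum (\<lambda>x. fo (f x) c) A)"
    using insert by (simp add: algebra_simps)
  then show ?case using gen_add[OF NT_l[of "f a" "sum f A" c] insert.IH] by simp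
qed

lemma NT_sum_r: "fo c (sum f I) - sum (\<lambda>x. fo c (f x)) I \<in> NT"
proof (induction I rule: infinite_finite_induct)
  case (infinite A) then show ?case using NT_zero_r by simp
next
  case empty then show ?case using NT_zero_r by simp
next
  case (insert a A)
  have "fo c (sum f (insert a A)) - sum (\<lambda>x. fo c (f x)) (insert a A) =
        (fo c (f a + sum f A) - fo c (f a) - fo c (sum f A)) + (fo c (sum f A) - sum (\<lambda>x. fo c (f x)) A)"
    using insert by (simp add: algebra_simps)
  then show ?case using gen_add[OF NT_r[of c "f a" "sum f A"] insert.IH] by simp
qed

lemma NT_sumlist_l: "fo (sum_list (map f xs)) c - sum_list (map (\<lambda>x. fo (f x) c) xs) \<in> NT"
proof (induction xs)
  case Nil then show ?case using NT_zero_l by simp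
next
  case (Cons a xs)
  have "fo (sum_list (map f (a # xs))) c - sum_list (map (\<lambda>x. fo (f x) c) (a # xs)) =
        (fo (f a + sum_list (map f xs)) c - fo (f a) c - fo (sum_list (map f xs)) c)
       + (fo (sum_list (map f xs)) c - sum_list (map (\<lambda>x. fo (f x) c) xs))"
    by (simp add: algebra_simps)
  then show ?case using gen_add[OF NT_l[of "f a" "sum_list (map f xs)" c] Cons.IH] by (simp add: diff_diff_eq)
qed

lemma NT_sumlist_r: "fo c (sum_list (map f xs)) - sum_list (map (\<lambda>x. fo c (f x)) xs) \<in> NT"
proof (induction xs)
  case Nil then show ?case using NT_zero_r by simp
next
  case (Cons a xs)
  have "fo c (sum_list (map f (a # xs))) - sum_list (map (\<lambda>x. fo c (f x)) (a # xs)) =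
        (fo c (f a + sum_list (map f xs)) - fo c (f a) - fo c (sum_list (map f xs)))
       + (fo c (sum_list (map f xs)) - sum_list (map (\<lambda>x. fo c (f x)) xs))"
    by (simp add: algebra_simps)
  then show ?case using gen_add[OF NT_r[of c "f a" "sum_list (map f xs)"] Cons.IH] by (simp add: diff_diff_eq)
qed

locale el2 =
  fixes dummy :: "'a::ab_group_add itself"
  assumes el2: "\<And>x::'a. x + x = 0"
begin

lemma neg_self[simp]: "- (x::'a) = x"
  using el2[of x] by (simp add: add_eq_0_iff2)

lemma minus_eq_plus: "(x::'a) - y = x + y"
  by (metis diff_conv_add_uminus neg_self)

lemma NT_double: "fo (a::'a) c + fo a c \<in> NT"
proof -
  have "- (fo (a + a) c - fo a c - fo a c) \<in> NT" using NT_l gen_neg by blast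
  then have "fo a c + fo a c - fo 0 c \<in> NT" by (simp add: el2 algebra_simps)
  then show ?thesis using NT_zero_l gen_lin by (metis diff_add_cancel)
qed

lemma NW_swap: "fo (a::'a) b + fo b a \<in> NW"
proof -
  have 1: "fo (a + b) (a + b) \<in> NW" by (rule NW_diag)
  have 2: "fo (a + b) (a + b) - fo a (a + b) - fo b (a + b) \<in> NW" by (rule NT_NW[OF NT_l])
  have 3: "fo a (a + b) - fo a a - fo a b \<in> NW" by (rule NT_NW[OF NT_r])
  have 4: "fo b (a + b) - fo b a - fo b b \<in> NW" by (rule NT_NW[OF NT_r])
  have "fo a b + fo b a = fo (a + b) (a + b) - (fo (a + b) (a + b) - fo a (a + b) - fo b (a + b))
     - (fo a (a + b) - fo a a - fo a b) - (fo b (a + b) - fo b a - fo b b) - fo a a - fo b b"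
    by (simp add: algebra_simps)
  then show ?thesis using 1 2 3 4 NW_diag[of a] NW_diag[of b] by (metis gen_diff)
qed

lemma NW_swap_diff: "fo (a::'a) b - fo b a \<in> NW"
proof -
  have "fo a b - fo b a = (fo a b + fo b a) - (fo b a + fo b a)" by (simp add: algebra_simps)
  then show ?thesis using NW_swap NT_NW[OF NT_double] gen_diff by metis
qed

end

section \<open>Coordinates\<close>

lemma bit_add_one: "((x::bit) + y = 1) = ((x = 1) \<noteq> (y = 1))"
  by (cases x; cases y) auto

definition sc2 :: "bit \<Rightarrow> 'a::ab_group_add \<Rightarrow> 'a" where
  "sc2 r x = (if r = 0 then 0 else x)"

lemma (in el2) vs: "vector_space (sc2 :: bit \<Rightarrow> 'a \<Rightarrow> 'a)"
proof (unfold_locales)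
  fix a b :: bit and x y :: 'a
  show "sc2 a (x + y) = sc2 a x + sc2 a y" by (cases a) (auto simp: sc2_def)
  show "sc2 (a + b) x = sc2 a x + sc2 b x" by (cases a; cases b) (auto simp: sc2_def el2)
  show "sc2 a (sc2 b x) = sc2 (a * b) x" by (cases a; cases b) (auto simp: sc2_def)
  show "sc2 1 x = x" by (simp add: sc2_def)
qed

lemma (in el2) coords_exist:
  "\<exists>c :: 'a \<Rightarrow> 'a \<Rightarrow> bool. (\<forall>b g h. c b (g + h) = (c b g \<noteq> c b h)) \<and>
     (\<forall>g. finite {b. c b g}) \<and> (\<forall>g. g = sum (\<lambda>b. b) {b. c b g})"
proof -
  interpret V: vector_space "sc2 :: bit \<Rightarrow> 'a \<Rightarrow> 'a" by (rule vs)
  obtain B where B: "V.independent B" "UNIV \<subseteq> V.span B"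
    using V.basis_exists[of UNIV] by blast
  define c where "c b g = (V.representation B g b = 1)" for b g
  have "\<forall>b g h. c b (g + h) = (c b g \<noteq> c b h)"
  proof (intro allI)
    fix b g h
    have "V.representation B (g + h) b = V.representation B g b + V.representation B h b"
    proof -
      have "h \<in> V.span B" "g \<in> V.span B" using B(2) by auto
      from V.representation_add[OF B(1) this] show ?thesis by (rule fun_cong)
    qed
    then show "c b (g + h) = (c b g \<noteq> c b h)"
      unfolding c_def by (simp only: bit_add_one)
  qed
  moreover have "\<forall>g. finite {b. c b g}"
  proof
    fix g
    have "{b. c b g} = {b. V.representation B g b \<noteq> 0}" by (auto simp: c_def)
    then show "finite {b. c b g}" using V.finite_representation by simp
  qed
  moreover have "\<forall>g. g = sum (\<lambda>b. b) {b. c b g}"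
  proof
    fix g
    have "sum (\<lambda>b. sc2 (V.representation B g b) b) {b. V.representation B g b \<noteq> 0} = g"
      using V.sum_nonzero_representation_eq[OF B(1)] B(2) by blast
    moreover have "{b. V.representation B g b \<noteq> 0} = {b. c b g}" by (auto simp: c_def)
    moreover have "sum (\<lambda>b. sc2 (V.representation B g b) b) {b. c b g} = sum (\<lambda>b. b) {b. c b g}"
      by (rule sum.cong) (auto simp: c_def sc2_def)
    ultimately show "g = sum (\<lambda>b. b) {b. c b g}"
      by simp
  qed
  ultimately show ?thesis by blast
qed


section \<open>Homomorphic images of generated subgroups\<close>

lemma hom_gen:
  assumes "\<And>r. r \<in> R \<Longrightarrow> frag_extend f r \<in> GEN R'" "x \<in> GEN R"
  shows "frag_extend f x \<in> GEN R'"
  using assms(2)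
proof (induction x rule: generate.induct)
  case one then show ?case by simp
next
  case (incl h) then show ?case using assms(1) by blast
next
  case (inv h) then show ?case using assms(1) by (simp add: frag_extend_minus)
next
  case (eng h1 h2) then show ?case by (simp add: frag_extend_add gen_add)
qed

definition psi :: "('b \<Rightarrow> int) \<Rightarrow> ('b \<Rightarrow>\<^sub>0 int) \<Rightarrow> int" where
  "psi w x = Poly_Mapping.lookup (frag_extend (\<lambda>p. frag_cmul (w p) (frag_of ())) x) ()"

lemma psi_add: "psi w (x + y) = psi w x + psi w y"
  by (simp add: psi_def frag_extend_add lookup_add)
lemma psi_minus: "psi w (- x) = - psi w x"
  by (simp add: psi_def frag_extend_minus)
lemma psi_diff: "psi w (x - y) = psi w x - psi w y"
  by (simp add: psi_def frag_extend_diff lookup_minus)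
lemma psi_zero[simp]: "psi w 0 = 0"
  by (simp add: psi_def)
lemma psi_of[simp]: "psi w (frag_of p) = w p"
  by (simp add: psi_def lookup_frag_of)
lemma psi_sum_list: "psi w (sum_list (map f xs)) = sum_list (map (\<lambda>x. psi w (f x)) xs)"
  by (induction xs) (auto simp: psi_add)

lemma psi_gen:
  assumes "\<And>r. r \<in> R \<Longrightarrow> even (psi w r)" "x \<in> GEN R"
  shows "even (psi w x)"
  using assms(2)
proof (induction x rule: generate.induct)
  case one then show ?case by simp
next
  case (incl h) then show ?case using assms(1) by blast
next
  case (inv h) then show ?case using assms(1) by (simp add: psi_minus)
next
  case (eng h1 h2) then show ?case by (simp add: psi_add)
qed

definition sig :: "('a \<times> 'a \<Rightarrow>\<^sub>0 int) \<Rightarrow> ('a \<times> 'a \<Rightarrow>\<^sub>0 int)" where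
  "sig = frag_extend (\<lambda>(a, b). fo a b + fo b a)"

lemma sig_of[simp]: "sig (fo a b) = fo a b + fo b a"
  by (simp add: sig_def)

lemma (in el2) sig_NW:
  assumes "(x :: 'a \<times> 'a \<Rightarrow>\<^sub>0 int) \<in> NW" shows "sig x \<in> NT"
  unfolding sig_def
proof (rule hom_gen[OF _ assms])
  fix r :: "'a \<times> 'a \<Rightarrow>\<^sub>0 int" assume "r \<in> wedge_rels"
  then consider (l) a b c where "r = fo (a + b) c - fo a c - fo b c"
    | (r) a b c where "r = fo a (b + c) - fo a b - fo a c"
    | (d) g where "r = fo g g"
    unfolding wedge_rels_def tensor_rels_def by blast
  then show "frag_extend (\<lambda>(a, b). fo a b + fo b a) r \<in> NT"
  proof cases
    case (l a b c)
    have "frag_extend (\<lambda>(a, b). fo a b + fo b a) r =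
      (fo (a + b) c - fo a c - fo b c) + (fo c (a + b) - fo c a - fo c b)"
      unfolding l by (simp add: frag_extend_diff frag_extend_add algebra_simps)
    then show ?thesis using gen_add[OF NT_l NT_r] by simp
  next
    case (r a b c)
    have "frag_extend (\<lambda>(a, b). fo a b + fo b a) r =
      (fo a (b + c) - fo a b - fo a c) + (fo (b + c) a - fo b a - fo c a)"
      unfolding r by (simp add: frag_extend_diff frag_extend_add algebra_simps)
    then show ?thesis using gen_add[OF NT_r NT_l] by simp
  next
    case (d g)
    then show ?thesis using NT_double[of g g] by simp
  qed
qed

locale cs = el2 "TYPE('a::ab_group_add)" +
  fixes c :: "'a::ab_group_add \<Rightarrow> 'a \<Rightarrow> bool" and lt :: "'a \<Rightarrow> 'a \<Rightarrow> bool"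
  assumes c_add: "c b (g + h) = (c b g \<noteq> c b h)"
    and c_fin: "finite {b. c b g}"
    and c_sum: "g = sum (\<lambda>b. b) {b. c b g}"
    and lt_irrefl: "\<not> lt x x"
    and lt_asym: "lt x y \<Longrightarrow> \<not> lt y x"
    and lt_total: "x \<noteq> y \<Longrightarrow> lt x y \<or> lt y x"
begin

lemma c_zero[simp]: "\<not> c b 0"
proof -
  have "c b (0 + 0) = (c b 0 \<noteq> c b 0)" by (rule c_add)
  then show ?thesis by auto
qed

lemma zero_iff_coords: "(g = 0) \<longleftrightarrow> (\<forall>b. \<not> c b g)"
proof
  assume "g = 0"
  then show "\<forall>b. \<not> c b g" by simp
next
  assume "\<forall>b. \<not> c b g"
  then have "{b. c b g} = {}" by auto
  then show "g = 0" by (metis c_sum sum.empty)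
qed

lemma eq_of_plus_zero: "(g::'a) + h = 0 \<Longrightarrow> g = h"
  using add_eq_0_iff2[of g h] by simp

definition wb :: "'a \<Rightarrow> 'a \<times> 'a \<Rightarrow> int" where
  "wb b p = of_bool (c b (fst p) \<and> c b (snd p))"

lemma wb_NT: assumes "x \<in> NT" shows "even (psi (wb b) x)"
proof (rule psi_gen[OF _ assms])
  fix r :: "'a \<times> 'a \<Rightarrow>\<^sub>0 int" assume "r \<in> tensor_rels"
  then consider (l) a a' d where "r = fo (a + a') d - fo a d - fo a' d"
    | (r) a a' d where "r = fo d (a + a') - fo d a - fo d a'"
    unfolding tensor_rels_def by blast
  then show "even (psi (wb b) r)"
  proof cases
    case (l a a' d)
    then show ?thesis
      by (cases "c b a"; cases "c b a'"; cases "c b d") (auto simp: psi_diff wb_def c_add)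
  next
    case (r a a' d)
    then show ?thesis
      by (cases "c b a"; cases "c b a'"; cases "c b d") (auto simp: psi_diff wb_def c_add)
  qed
qed

lemma diag_inj: assumes "fo (g::'a) g - fo h h \<in> NT" shows "g = h"
proof -
  have "\<forall>b. \<not> c b (g + h)"
  proof
    fix b
    have "even (psi (wb b) (fo g g - fo h h))" using wb_NT[OF assms] .
    then show "\<not> c b (g + h)"
      by (cases "c b g"; cases "c b h") (auto simp: psi_diff wb_def c_add)
  qed
  then show ?thesis using zero_iff_coords eq_of_plus_zero by blast
qed

lemma c_sum_list: "c b (sum_list (map (f::'b \<Rightarrow> 'a) xs)) = odd (length (filter (\<lambda>x. c b (f x)) xs))"
  by (induction xs) (auto simp: c_add)

lemma sum_zero_of_diag:
  fixes f :: "'b \<Rightarrow> 'a"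
  assumes "sum_list (map (\<lambda>x. fo (f x) (f x)) xs) \<in> NT"
  shows "sum_list (map f xs) = 0"
proof -
  have "\<forall>b. \<not> c b (sum_list (map f xs))"
  proof
    fix b
    have e: "even (psi (wb b) (sum_list (map (\<lambda>x. fo (f x) (f x)) xs)))" using wb_NT[OF assms] .
    have "psi (wb b) (sum_list (map (\<lambda>x. fo (f x) (f x)) xs)) = int (length (filter (\<lambda>x. c b (f x)) xs))"
      by (induction xs) (auto simp: psi_add wb_def)
    with e show "\<not> c b (sum_list (map f xs))" by (simp add: c_sum_list)
  qed
  then show ?thesis using zero_iff_coords by blast
qed

end


lemma sum_symdiff_gen:
  assumes "finite A" "finite B" "\<And>x. h x + h x \<in> GEN R"
  shows "sum h {x. (x \<in> A) \<noteq> (x \<in> B)} - sum h A - sum h B \<in> GEN R"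
proof -
  have e1: "{x. (x \<in> A) \<noteq> (x \<in> B)} = (A - B) \<union> (B - A)" by auto
  have s1: "sum h {x. (x \<in> A) \<noteq> (x \<in> B)} = sum h (A - B) + sum h (B - A)"
    unfolding e1 using assms by (intro sum.union_disjoint) auto
  have s2: "sum h A = sum h (A \<inter> B) + sum h (A - B)" using assms(1) by (rule sum.Int_Diff)
  have s3: "sum h B = sum h (B \<inter> A) + sum h (B - A)" using assms(2) by (rule sum.Int_Diff)
  have "sum h {x. (x \<in> A) \<noteq> (x \<in> B)} - sum h A - sum h B = - sum (\<lambda>x. h x + h x) (A \<inter> B)"
    unfolding s1 s2 s3 by (simp add: sum.distrib Int_commute algebra_simps)
  moreover have "sum (\<lambda>x. h x + h x) (A \<inter> B) \<in> GEN R" by (rule gen_sum) (rule assms(3))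
  ultimately show ?thesis by simp
qed

lemma sum_double_gen: "(\<And>x. h x + h x \<in> GEN R) \<Longrightarrow> sum h I + sum h I \<in> GEN R"
  using gen_sum[of I "\<lambda>x. h x + h x" R] by (simp add: sum.distrib)

context cs
begin

definition sup :: "'a \<Rightarrow> 'a set" where "sup g = {b. c b g}"

lemma sup_fin: "finite (sup g)" by (simp add: sup_def c_fin)
lemma sup_add: "sup (g + h) = {x. (x \<in> sup g) \<noteq> (x \<in> sup h)}" by (auto simp: sup_def c_add)
lemma sup_sum: "sum (\<lambda>b. b) (sup g) = g" unfolding sup_def using c_sum[of g, symmetric] .

definition ite_lt :: "'a \<Rightarrow> 'a \<Rightarrow> ('a \<times> 'a \<Rightarrow>\<^sub>0 int)" where
  "ite_lt x y = (if lt x y then fo x y else 0)"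

definition Q :: "'a \<Rightarrow> 'a \<Rightarrow> ('a \<times> 'a \<Rightarrow>\<^sub>0 int)" where
  "Q a b = sum (\<lambda>x. sum (\<lambda>y. ite_lt x y) (sup b)) (sup a)"

definition rho :: "('a \<times> 'a \<Rightarrow>\<^sub>0 int) \<Rightarrow> ('a \<times> 'a \<Rightarrow>\<^sub>0 int)" where
  "rho = frag_extend (\<lambda>(a, b). Q a b)"

lemma ite_double: "ite_lt x y + ite_lt x y \<in> NW"
  using NT_NW[OF NT_double[of x y]] by (simp add: ite_lt_def)

lemma Q_l: "Q (a + a') d - Q a d - Q a' d \<in> NW"
  unfolding Q_def sup_add
  by (rule sum_symdiff_gen[OF sup_fin sup_fin]) (rule sum_double_gen, rule ite_double)

lemma Q_swap: "Q a b = sum (\<lambda>y. sum (\<lambda>x. ite_lt x y) (sup a)) (sup b)"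
  unfolding Q_def by (rule sum.swap)

lemma Q_r: "Q d (a + a') - Q d a - Q d a' \<in> NW"
  unfolding Q_swap sup_add
  by (rule sum_symdiff_gen[OF sup_fin sup_fin]) (rule sum_double_gen, rule ite_double)

lemma rho_NT: assumes "x \<in> NT" shows "rho x \<in> NW"
  unfolding rho_def
proof (rule hom_gen[OF _ assms])
  fix r :: "'a \<times> 'a \<Rightarrow>\<^sub>0 int" assume "r \<in> tensor_rels"
  then consider (l) a a' d where "r = fo (a + a') d - fo a d - fo a' d"
    | (r) a a' d where "r = fo d (a + a') - fo d a - fo d a'"
    unfolding tensor_rels_def by blast
  then show "frag_extend (\<lambda>(a, b). Q a b) r \<in> NW"
  proof cases
    case (l a a' d)
    then show ?thesis using Q_l by (simp add: frag_extend_diff)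
  next
    case (r a a' d)
    then show ?thesis using Q_r by (simp add: frag_extend_diff)
  qed
qed

lemma expansion:
  "fo a b - sum (\<lambda>x. sum (\<lambda>y. fo x y) (sup b)) (sup a) \<in> NT"
proof -
  have 1: "fo (sum (\<lambda>x. x) (sup a)) b - sum (\<lambda>x. fo x b) (sup a) \<in> NT"
    by (rule NT_sum_l)
  have 2: "fo x (sum (\<lambda>y. y) (sup b)) - sum (\<lambda>y. fo x y) (sup b) \<in> NT" for x
    by (rule NT_sum_r)
  have 3: "sum (\<lambda>x. fo x b - sum (\<lambda>y. fo x y) (sup b)) (sup a) \<in> NT"
    by (rule gen_sum) (use 2 sup_sum[of b] in simp)
  have "fo a b - sum (\<lambda>x. sum (\<lambda>y. fo x y) (sup b)) (sup a) =
     (fo (sum (\<lambda>x. x) (sup a)) b - sum (\<lambda>x. fo x b) (sup a))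
      + sum (\<lambda>x. fo x b - sum (\<lambda>y. fo x y) (sup b)) (sup a)"
    by (simp add: sup_sum sum_subtractf)
  then show ?thesis using gen_add[OF 1 3] by simp
qed

lemma term_NW: "fo x y - ite_lt x y - ite_lt y x \<in> NW"
proof (cases "x = y")
  case True then show ?thesis using NW_diag[of x] by (simp add: ite_lt_def lt_irrefl)
next
  case False
  then consider "lt x y" | "lt y x" using lt_total by blast
  then show ?thesis
  proof cases
    case 1 then show ?thesis using lt_asym[OF 1] by (simp add: ite_lt_def)
  next
    case 2 then show ?thesis using lt_asym[OF 2] NW_swap_diff[of x y] by (simp add: ite_lt_def)
  qed
qed

lemma R2: "fo a b - (Q a b + Q b a) \<in> NW"
proof -
  let ?E = "sum (\<lambda>x. sum (\<lambda>y. fo x y) (sup b)) (sup a)"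
  have QA: "Q b a = sum (\<lambda>x. sum (\<lambda>y. ite_lt y x) (sup b)) (sup a)"
    unfolding Q_def by (rule sum.swap)
  have "?E - Q a b - Q b a = sum (\<lambda>x. sum (\<lambda>y. fo x y - ite_lt x y - ite_lt y x) (sup b)) (sup a)"
    unfolding QA unfolding Q_def by (simp add: sum_subtractf)
  also have "\<dots> \<in> NW" by (intro gen_sum) (rule term_NW)
  finally have 1: "?E - Q a b - Q b a \<in> NW" .
  have 2: "fo a b - ?E \<in> NW" using NT_NW[OF expansion] .
  have eq: "fo a b - (Q a b + Q b a) = (fo a b - ?E) + (?E - Q a b - Q b a)" by simp
  show ?thesis by (simp only: eq) (rule gen_add[OF 2 1])
qed

lemma rho_sig: fixes y :: "'a \<times> 'a \<Rightarrow>\<^sub>0 int" shows "y - rho (sig y) \<in> NW"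
proof -
  have "Poly_Mapping.keys y \<subseteq> UNIV" by simp
  then show ?thesis
  proof (induction y rule: frag_induction)
    case zero then show ?case by (simp add: rho_def sig_def)
  next
    case (one x)
    obtain a b where x: "x = (a, b)" by force
    show ?case using R2[of a b] by (simp add: x rho_def frag_extend_add)
  next
    case (diff u v)
    have eq: "u - v - rho (sig (u - v)) = (u - rho (sig u)) - (v - rho (sig v))"
      by (simp add: rho_def sig_def frag_extend_diff)
    show ?case by (simp only: eq) (rule gen_diff[OF diff.IH])
  qed
qed

lemma NW_of_sig: fixes y :: "'a \<times> 'a \<Rightarrow>\<^sub>0 int" assumes "sig y \<in> NT" shows "y \<in> NW"
proof -
  have "rho (sig y) \<in> NW" by (rule rho_NT[OF assms])
  from gen_add[OF rho_sig[of y] this] show ?thesis by simp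
qed

end


section \<open>Combinatorics of the presentation\<close>

abbreviation L :: "'a set \<Rightarrow> ('a \<times> bool) set" where "L T \<equiv> T \<times> UNIV"

lemma ueq_lists: "(w, w') \<in> U_eq T \<Longrightarrow> set w \<subseteq> L T \<and> set w' \<subseteq> L T"
proof (induction rule: U_eq.induct)
  case (relator u v r)
  then show ?case by (auto simp: U_relators_def)
qed auto

lemma ueq_ctx:
  assumes "(a, a') \<in> U_eq T" "set u \<subseteq> L T" "set v \<subseteq> L T"
  shows "(u @ a @ v, u @ a' @ v) \<in> U_eq T"
  using assms(1)
proof (induction rule: U_eq.induct)
  case (refl w) then show ?case using assms by (intro U_eq.refl) auto
next
  case (sym w w') then show ?case using U_eq.sym by blast
next
  case (trans w w' w'') then show ?case using U_eq.trans by blast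
next
  case (cancel u' v' t b)
  have "((u @ u') @ [(t, b), (t, \<not> b)] @ (v' @ v), (u @ u') @ (v' @ v)) \<in> U_eq T"
    using cancel assms by (intro U_eq.cancel) auto
  then show ?case by simp
next
  case (relator u' v' r)
  have "((u @ u') @ r @ (v' @ v), (u @ u') @ (v' @ v)) \<in> U_eq T"
    using relator assms by (intro U_eq.relator) auto
  then show ?case by simp
qed

lemma ueq_ctx_l: "(a, a') \<in> U_eq T \<Longrightarrow> set u \<subseteq> L T \<Longrightarrow> (u @ a, u @ a') \<in> U_eq T"
  using ueq_ctx[of a a' T u "[]"] by simp
lemma ueq_ctx_r: "(a, a') \<in> U_eq T \<Longrightarrow> set v \<subseteq> L T \<Longrightarrow> (a @ v, a' @ v) \<in> U_eq T"
  using ueq_ctx[of a a' T "[]" v] by simp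

lemma ueq_refl: "set w \<subseteq> L T \<Longrightarrow> (w, w) \<in> U_eq T" by (rule U_eq.refl)

lemma cancel0: "t \<in> T \<Longrightarrow> ([(t, b), (t, \<not> b)], []) \<in> U_eq T"
  using U_eq.cancel[of "[]" T "[]" t b] by simp

lemma rel_sq: "t \<in> T \<Longrightarrow> ([(t, True), (t, True)], []) \<in> U_eq T"
  using U_eq.relator[of "[]" T "[]" "[(t, True), (t, True)]"] by (simp add: U_relators_def)

context el2
begin

lemma rel_comm:
  fixes T :: "'a set"
  assumes "t \<in> T" "s \<in> T"
  shows "([(t, True), (s, True), (t, False), (s, False)], []) \<in> U_eq T"
proof -
  have e: "t + t - s = s" using el2[of t] by (simp add: minus_eq_plus)
  have "[(t, True), (s, True), (t, False), (s, False)] \<in> U_relators T"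
    unfolding U_relators_def using assms e by (intro UnI2) (auto intro!: exI[of _ s] exI[of _ t])
  then show ?thesis using U_eq.relator[of "[]" T "[]"] by simp
qed

lemma inv_letter: fixes T :: "'a set" assumes "t \<in> T" shows "([(t, False)], [(t, True)]) \<in> U_eq T"
proof -
  have 1: "([(t, False)] @ [(t, True), (t, True)], [(t, False)]) \<in> U_eq T"
    using ueq_ctx_l[OF rel_sq[OF assms], of "[(t, False)]"] assms by simp
  have 2: "([(t, False), (t, True)] @ [(t, True)], [(t, True)]) \<in> U_eq T"
    using ueq_ctx_r[OF cancel0[OF assms, of False], of "[(t, True)]"] assms by simp
  show ?thesis using U_eq.trans[OF U_eq.sym[OF 1]] 2 by simp
qed

lemma norm_letter: fixes T :: "'a set" assumes "t \<in> T" shows "([(t, b)], [(t, True)]) \<in> U_eq T"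
  using inv_letter[OF assms] ueq_refl[of "[(t, True)]" T] assms by (cases b) auto

lemma comm_TT:
  fixes T :: "'a set"
  assumes "t \<in> T" "s \<in> T"
  shows "([(t, True), (s, True)], [(s, True), (t, True)]) \<in> U_eq T"
proof -
  have 1: "([(t, True), (s, True)] @ [(t, False), (t, True)], [(t, True), (s, True)]) \<in> U_eq T"
    using ueq_ctx_l[OF cancel0[OF assms(1), of False], of "[(t, True), (s, True)]"] assms by simp
  have 2: "([(t, True), (s, True), (t, False)] @ [(s, False), (s, True)] @ [(t, True)],
            [(t, True), (s, True), (t, False)] @ [(t, True)]) \<in> U_eq T"
    using ueq_ctx[OF cancel0[OF assms(2), of False], of "[(t, True), (s, True), (t, False)]" "[(t, True)]"]
      assms by simp
  have 3: "([(t, True), (s, True), (t, False), (s, False), (s, True), (t, True)], [(s, True), (t, True)]) \<in> U_eq T"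
    using ueq_ctx_r[OF rel_comm[OF assms], of "[(s, True), (t, True)]"] assms by simp
  have a1: "([(t, True), (s, True)], [(t, True), (s, True), (t, False), (t, True)]) \<in> U_eq T"
    using U_eq.sym[OF 1] by simp
  have a2: "([(t, True), (s, True), (t, False), (t, True)], [(t, True), (s, True), (t, False), (s, False), (s, True), (t, True)]) \<in> U_eq T"
    using U_eq.sym[OF 2] by simp
  show ?thesis using U_eq.trans[OF U_eq.trans[OF a1 a2] 3] by simp
qed

lemma comm2:
  fixes T :: "'a set"
  assumes "x \<in> L T" "y \<in> L T"
  shows "([x, y], [y, x]) \<in> U_eq T"
proof -
  obtain t b s b' where x: "x = (t, b)" and y: "y = (s, b')" and ts: "t \<in> T" "s \<in> T"
    using assms by auto
  have nx: "([x], [(t, True)]) \<in> U_eq T" using norm_letter[OF ts(1)] x by simp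
  have ny: "([y], [(s, True)]) \<in> U_eq T" using norm_letter[OF ts(2)] y by simp
  have 1: "([x, y], [(t, True), y]) \<in> U_eq T" using ueq_ctx_r[OF nx, of "[y]"] assms by simp
  have 2: "([(t, True), y], [(t, True), (s, True)]) \<in> U_eq T" using ueq_ctx_l[OF ny, of "[(t, True)]"] ts by simp
  have 3: "([(s, True), (t, True)], [y, (t, True)]) \<in> U_eq T" using U_eq.sym[OF ueq_ctx_r[OF ny, of "[(t, True)]"]] ts by simp
  have 4: "([y, (t, True)], [y, x]) \<in> U_eq T" using U_eq.sym[OF ueq_ctx_l[OF nx, of "[y]"]] assms by simp
  show ?thesis
    using U_eq.trans[OF U_eq.trans[OF U_eq.trans[OF 1 2] comm_TT[OF ts]] U_eq.trans[OF 3 4]] .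
qed

lemma move:
  fixes T :: "'a set"
  assumes "x \<in> L T" "set p \<subseteq> L T"
  shows "(x # p, p @ [x]) \<in> U_eq T"
  using assms(2)
proof (induction p)
  case Nil then show ?case using ueq_refl[of "[x]" T] assms by simp
next
  case (Cons y p)
  have 1: "([x, y] @ p, [y, x] @ p) \<in> U_eq T" using ueq_ctx_r[OF comm2[OF assms(1)], of y p] Cons by simp
  have 2: "([y] @ (x # p), [y] @ (p @ [x])) \<in> U_eq T" using ueq_ctx_l[OF Cons.IH, of "[y]"] Cons by simp
  show ?case using U_eq.trans[OF 1] 2 by simp
qed

lemma pair_cancel:
  fixes T :: "'a set"
  assumes "x \<in> L T" "y \<in> L T" "fst x = fst y"
  shows "([x, y], []) \<in> U_eq T"
proof -
  obtain t b b' where x: "x = (t, b)" and y: "y = (t, b')" and t: "t \<in> T"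
    using assms by (cases x; cases y) auto
  have 1: "([x, y], [(t, True), y]) \<in> U_eq T" using ueq_ctx_r[OF norm_letter[OF t, of b], of "[y]"] x assms by simp
  have 2: "([(t, True), y], [(t, True), (t, True)]) \<in> U_eq T" using ueq_ctx_l[OF norm_letter[OF t, of b'], of "[(t, True)]"] y t by simp
  show ?thesis using U_eq.trans[OF U_eq.trans[OF 1 2] rel_sq[OF t]] .
qed

lemma cancel_far:
  fixes T :: "'a set"
  assumes "x \<in> L T" "set p \<subseteq> L T" "y \<in> L T" "set q \<subseteq> L T" "fst x = fst y"
  shows "(x # p @ y # q, p @ q) \<in> U_eq T"
proof -
  have 1: "((x # p) @ (y # q), (p @ [x]) @ (y # q)) \<in> U_eq T"
    using ueq_ctx_r[OF move[OF assms(1,2)], of "y # q"] assms by simp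
  have 2: "(p @ [x, y] @ q, p @ [] @ q) \<in> U_eq T"
    using ueq_ctx[OF pair_cancel[OF assms(1,3,5)]] assms by blast
  show ?thesis using U_eq.trans[OF 1] 2 by simp
qed

definition cnt :: "('a \<times> bool) list \<Rightarrow> 'a \<Rightarrow> nat" where
  "cnt w t = length (filter (\<lambda>x. fst x = t) w)"

lemma even_ueq_nil:
  fixes T :: "'a set"
  shows "set z \<subseteq> L T \<Longrightarrow> (\<forall>t. even (cnt z t)) \<Longrightarrow> (z, []) \<in> U_eq T"
proof (induction "length z" arbitrary: z rule: less_induct)
  case less
  show ?case
  proof (cases z)
    case Nil then show ?thesis by (simp add: ueq_refl)
  next
    case (Cons x z1)
    have "odd (cnt z1 (fst x))" using less.prems(2)[rule_format, of "fst x"] Cons by (simp add: cnt_def)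
    then have "cnt z1 (fst x) \<noteq> 0" by (metis even_zero)
    then obtain y where y: "y \<in> set z1" "fst y = fst x"
      by (auto simp: cnt_def filter_empty_conv)
    obtain p q where z1: "z1 = p @ y # q" using split_list[OF y(1)] by blast
    have r1: "(z, p @ q) \<in> U_eq T"
      using cancel_far[of x T p y q] less.prems Cons z1 y by auto
    have "(p @ q, []) \<in> U_eq T"
    proof (rule less.hyps)
      show "length (p @ q) < length z" using Cons z1 by simp
      show "set (p @ q) \<subseteq> L T" using less.prems Cons z1 by auto
      show "\<forall>t. even (cnt (p @ q) t)"
      proof
        fix t
        have "cnt z t = cnt (p @ q) t + (if fst x = t then 2 else 0)"
          using Cons z1 y by (auto simp: cnt_def)
        then show "even (cnt (p @ q) t)" using less.prems(2)[rule_format, of t] by (cases "fst x = t") auto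
      qed
    qed
    then show ?thesis using U_eq.trans[OF r1] by blast
  qed
qed

lemma reduce:
  fixes T :: "'a set"
  shows "set z \<subseteq> L T \<Longrightarrow> \<exists>z'. (z, z') \<in> U_eq T \<and> distinct (map fst z') \<and> set z' \<subseteq> L T \<and> length z' \<le> length z"
proof (induction "length z" arbitrary: z rule: less_induct)
  case less
  show ?case
  proof (cases z)
    case Nil then show ?thesis by (auto simp: ueq_refl)
  next
    case (Cons x z1)
    obtain z1' where h1: "(z1, z1') \<in> U_eq T" "distinct (map fst z1')" "set z1' \<subseteq> L T" "length z1' \<le> length z1"
      using less.hyps[of z1] less.prems Cons by auto
    have xL: "x \<in> L T" using less.prems Cons by auto
    have r1: "([x] @ z1, [x] @ z1') \<in> U_eq T" by (rule ueq_ctx_l[OF h1(1)]) (use xL in auto)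
    show ?thesis
    proof (cases "fst x \<in> fst ` set z1'")
      case True
      then obtain y where y: "y \<in> set z1'" "fst y = fst x" by auto
      obtain p q where z1': "z1' = p @ y # q" using split_list[OF y(1)] by blast
      have r2: "(x # z1', p @ q) \<in> U_eq T"
        using cancel_far[of x T p y q] h1(3) xL z1' y by auto
      obtain z'' where h2: "(p @ q, z'') \<in> U_eq T" "distinct (map fst z'')" "set z'' \<subseteq> L T" "length z'' \<le> length (p @ q)"
        using less.hyps[of "p @ q"] h1(3,4) z1' Cons by force
      show ?thesis
        using U_eq.trans[OF U_eq.trans[OF r1 [simplified] r2] h2(1)] h2 h1(4) z1' Cons
        by (intro exI[of _ z'']) auto
    next
      case False
      then show ?thesis using r1 h1 Cons xL by (intro exI[of _ "x # z1'"]) auto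
    qed
  qed
qed

lemma cnt_relator: fixes T :: "'a set" shows "r \<in> U_relators T \<Longrightarrow> even (cnt r t)"
proof -
  assume "r \<in> U_relators T"
  then obtain t0 s where "r = [(t0, True), (t0, True)] \<or> r = [(t0, True), (s, True), (t0, False), (t0 + t0 - s, False)]"
    unfolding U_relators_def by blast
  moreover have "t0 + t0 - s = s" using el2[of t0] by (simp add: minus_eq_plus)
  ultimately show ?thesis by (auto simp: cnt_def)
qed

lemma parity_inv: fixes T :: "'a set" shows "(w, w') \<in> U_eq T \<Longrightarrow> even (cnt w t) = even (cnt w' t)"
proof (induction rule: U_eq.induct)
  case (cancel u v s b)
  then show ?case by (auto simp: cnt_def)
next
  case (relator u v r)
  have "cnt (u @ r @ v) t = cnt (u @ v) t + cnt r t" by (simp add: cnt_def)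
  then show ?case using cnt_relator[OF relator(3), of t] by simp
qed auto

lemma self_append_nil: fixes T :: "'a set" shows "set w \<subseteq> L T \<Longrightarrow> (w @ w, []) \<in> U_eq T"
  by (rule even_ueq_nil) (auto simp: cnt_def)

end


section \<open>Word invariants\<close>

definition Sw :: "('a::ab_group_add \<times> bool) list \<Rightarrow> 'a" where
  "Sw w = sum_list (map fst w)"

definition Cw :: "('a \<times> bool) list \<Rightarrow> ('a \<times> bool) list \<Rightarrow> ('a \<times> 'a \<Rightarrow>\<^sub>0 int)" where
  "Cw a b = sum_list (map (\<lambda>x. sum_list (map (\<lambda>y. fo (fst x) (fst y)) b)) a)"

fun Fw :: "('a \<times> bool) list \<Rightarrow> ('a \<times> 'a \<Rightarrow>\<^sub>0 int)" where
  "Fw [] = 0"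
| "Fw (x # w) = sum_list (map (\<lambda>y. fo (fst x) (fst y)) w) + Fw w"

definition Dw :: "('a \<times> bool) list \<Rightarrow> ('a \<times> 'a \<Rightarrow>\<^sub>0 int)" where
  "Dw w = sum_list (map (\<lambda>x. fo (fst x) (fst x)) w)"

lemma Sw_simps[simp]: "Sw [] = 0" "Sw (x # w) = fst x + Sw w" "Sw (a @ b) = Sw a + Sw b"
  by (auto simp: Sw_def)

lemma Cw_Nil[simp]: "Cw [] b = 0" "Cw a [] = 0"
  by (simp add: Cw_def) (induction a, auto simp: Cw_def)
  
lemma Cw_Cons_l: "Cw (x # a) b = sum_list (map (\<lambda>y. fo (fst x) (fst y)) b) + Cw a b"
  by (simp add: Cw_def)

lemma Cw_append_l: "Cw (a @ a') b = Cw a b + Cw a' b"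
  by (simp add: Cw_def)

lemma Cw_append_r: "Cw a (b @ b') = Cw a b + Cw a b'"
  by (induction a) (auto simp: Cw_def)

lemma Cw_Cons_r: "Cw a (y # b) = sum_list (map (\<lambda>x. fo (fst x) (fst y)) a) + Cw a b"
  by (induction a) (auto simp: Cw_def)

lemma Fw_append: "Fw (a @ b) = Fw a + Fw b + Cw a b"
  by (induction a) (auto simp: Cw_Cons_l)

lemma Cw_bilin: "Cw a b - fo (Sw a) (Sw b) \<in> NT"
proof (induction a)
  case Nil then show ?case using NT_zero_l by simp
next
  case (Cons x a)
  have 1: "sum_list (map (\<lambda>y. fo (fst x) (fst y)) b) - fo (fst x) (Sw b) \<in> NT"
    using gen_neg[OF NT_sumlist_r[of "fst x" fst b]] by (simp add: Sw_def)
  have 2: "fo (fst x + Sw a) (Sw b) - fo (fst x) (Sw b) - fo (Sw a) (Sw b) \<in> NT" by (rule NT_l)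
  have eq: "Cw (x # a) b - fo (Sw (x # a)) (Sw b) =
     (sum_list (map (\<lambda>y. fo (fst x) (fst y)) b) - fo (fst x) (Sw b)) + (Cw a b - fo (Sw a) (Sw b))
     - (fo (fst x + Sw a) (Sw b) - fo (fst x) (Sw b) - fo (Sw a) (Sw b))"
    by (simp add: Cw_Cons_l algebra_simps)
  show ?case by (simp only: eq) (intro gen_diff gen_add 1 2 Cons.IH)
qed

lemma sig_add: "sig (x + y) = sig x + sig y" by (simp add: sig_def frag_extend_add)
lemma sig_zero[simp]: "sig 0 = 0" by (simp add: sig_def)
lemma sig_sum_list: "sig (sum_list (map f xs)) = sum_list (map (\<lambda>x. sig (f x)) xs)"
  by (induction xs) (auto simp: sig_add)

lemma sig_Fw: "sig (Fw z) + Dw z = Cw z z"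
proof (induction z)
  case Nil then show ?case by (simp add: Dw_def)
next
  case (Cons x z)
  have "Cw (x # z) (x # z) = fo (fst x) (fst x) + sum_list (map (\<lambda>y. fo (fst x) (fst y)) z)
       + (sum_list (map (\<lambda>y. fo (fst y) (fst x)) z) + Cw z z)"
    by (simp add: Cw_Cons_l Cw_Cons_r)
  moreover have "sig (Fw (x # z)) = sum_list (map (\<lambda>y. fo (fst x) (fst y)) z)
      + sum_list (map (\<lambda>y. fo (fst y) (fst x)) z) + sig (Fw z)"
    by (simp add: sig_add sig_sum_list sum_list_addf)
  ultimately show ?case using Cons by (simp add: Dw_def algebra_simps)
qed

section \<open>Evaluation\<close>

definition ev :: "('a::ab_group_add \<times> bool) list \<Rightarrow> ('a \<times> 'a \<Rightarrow>\<^sub>0 int) set \<times> 'a \<times> int" where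
  "ev w = (NW #>\<^bsub>FA\<^esub> Fw w, Sw w, (-1) ^ length w)"

lemma wedge_one: "\<one>\<^bsub>wedge_grp\<^esub> = NW"
  by (simp add: wedge_grp_def)

context el2
begin

lemma sact_id[simp]: "sact v (g::'a) = g" by (simp add: sact_def)

lemma amb_mult_ev:
  fixes a b :: "('a \<times> bool) list"
  shows "ev a \<otimes>\<^bsub>amb_grp\<^esub> ev b = ev (a @ b)"
proof -
  have "NW #>\<^bsub>FA\<^esub> (Fw a + Fw b + fo (Sw a) (Sw b)) = NW #>\<^bsub>FA\<^esub> Fw (a @ b)"
  proof (subst rcos_eq_iff)
    have eq: "Fw a + Fw b + fo (Sw a) (Sw b) - Fw (a @ b) = - (Cw a b - fo (Sw a) (Sw b))"
      by (simp add: Fw_append)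
    show "Fw a + Fw b + fo (Sw a) (Sw b) - Fw (a @ b) \<in> NW"
      by (simp only: eq gen_neg_iff) (rule NT_NW[OF Cw_bilin[of a b]])
  qed
  then show ?thesis
    by (simp add: ev_def amb_grp_def wedge_grp_def wedge_elt_def rcos_mult power_add)
qed

lemma ev_ins:
  fixes r u v :: "('a \<times> bool) list"
  assumes "Fw r \<in> NW" "Sw r = 0" "even (length r)"
  shows "ev (u @ r @ v) = ev (u @ v)"
proof -
  have "Fw (u @ r @ v) - Fw (u @ v) = Fw r + (Cw r v - fo (Sw r) (Sw v)) + fo 0 (Sw v)
      + (Cw u r - fo (Sw u) (Sw r)) + fo (Sw u) 0"
    using assms(2) by (simp add: Fw_append Cw_append_l Cw_append_r algebra_simps)
  also have "\<dots> \<in> NW"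
    by (intro gen_add assms(1) NT_NW[OF Cw_bilin] NT_NW[OF NT_zero_l] NT_NW[OF NT_zero_r])
  finally have "NW #>\<^bsub>FA\<^esub> Fw (u @ r @ v) = NW #>\<^bsub>FA\<^esub> Fw (u @ v)"
    by (subst rcos_eq_iff)
  moreover have "(-1::int) ^ length (u @ r @ v) = (-1) ^ length (u @ v)"
    using assms(3) by (simp add: power_add)
  ultimately show ?thesis using assms(2) by (simp add: ev_def)
qed

lemma ev_ueq:
  fixes T :: "'a set"
  assumes "(w, w') \<in> U_eq T"
  shows "ev w = ev w'"
  using assms
proof (induction rule: U_eq.induct)
  case (cancel u v t b)
  show ?case
    by (rule ev_ins) (auto simp: NW_diag el2)
next
  case (relator u v r)
  then obtain t0 s where "r = [(t0, True), (t0, True)] \<or> r = [(t0, True), (s, True), (t0, False), (t0 + t0 - s, False)]"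
    unfolding U_relators_def by blast
  moreover have "t0 + t0 - s = s" using el2[of t0] by (simp add: minus_eq_plus)
  ultimately have r: "r = [(t0, True), (t0, True)] \<or> r = [(t0, True), (s, True), (t0, False), (s, False)]"
    by simp
  show ?case
  proof (rule ev_ins)
    show "Fw r \<in> NW"
    proof (cases "r = [(t0, True), (t0, True)]")
      case True then show ?thesis by (simp add: NW_diag)
    next
      case False
      then have r': "r = [(t0, True), (s, True), (t0, False), (s, False)]" using r by simp
      have "Fw r = fo t0 t0 + fo s s + (fo t0 s + fo s t0) + (fo t0 s + fo t0 s)"
        by (simp add: r' algebra_simps)
      then show ?thesis
        by (simp only:) (intro gen_add NW_diag NW_swap NT_NW[OF NT_double])
    qed
    show "Sw r = 0" using r el2 by (auto simp: algebra_simps)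
    show "even (length r)" using r by auto
  qed
qed auto

end


abbreviation cls :: "'a::ab_group_add set \<Rightarrow> ('a \<times> bool) list \<Rightarrow> ('a \<times> bool) list set" where
  "cls T w \<equiv> U_eq T `` {w}"

lemma equiv_U: "equiv (lists (L T)) (U_eq T)"
proof (rule equivI)
  show "U_eq T \<subseteq> lists (L T) \<times> lists (L T)" by (auto dest!: ueq_lists)
  show "refl_on (lists (L T)) (U_eq T)" unfolding refl_on_def
    by (auto intro: ueq_refl)
  show "sym (U_eq T)" unfolding sym_def using U_eq.sym by blast
  show "trans (U_eq T)" unfolding trans_def using U_eq.trans by blast
qed

lemma carrier_U_E:
  assumes "A \<in> carrier (U_grp T)"
  obtains w where "set w \<subseteq> L T" "A = cls T w"
  using assms unfolding U_grp_def quotient_def by auto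

lemma cls_in: "set w \<subseteq> L T \<Longrightarrow> cls T w \<in> carrier (U_grp T)"
  unfolding U_grp_def quotient_def by auto

lemma cls_eq_iff: "set w \<subseteq> L T \<Longrightarrow> set w' \<subseteq> L T \<Longrightarrow> (cls T w = cls T w') \<longleftrightarrow> (w, w') \<in> U_eq T"
proof -
  assume "set w \<subseteq> L T" "set w' \<subseteq> L T"
  then have "w \<in> lists (L T)" "w' \<in> lists (L T)" by auto
  then show ?thesis using eq_equiv_class_iff[OF equiv_U] by blast
qed

lemma cls_mult:
  assumes "set a \<subseteq> L T" "set b \<subseteq> L T"
  shows "cls T a \<otimes>\<^bsub>U_grp T\<^esub> cls T b = cls T (a @ b)"
proof -
  have "U_eq T `` {a' @ b'} = cls T (a @ b)" if "a' \<in> cls T a" "b' \<in> cls T b" for a' b'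
  proof -
    have 1: "(a, a') \<in> U_eq T" "(b, b') \<in> U_eq T" using that by auto
    have "(a @ b, a' @ b) \<in> U_eq T" using ueq_ctx_r[OF 1(1)] assms by auto
    moreover have "(a' @ b, a' @ b') \<in> U_eq T" using ueq_ctx_l[OF 1(2)] ueq_lists[OF 1(1)] by auto
    ultimately have "(a @ b, a' @ b') \<in> U_eq T" using U_eq.trans by blast
    then show ?thesis using equiv_class_eq[OF equiv_U] by metis
  qed
  note h = this
  have ha: "a \<in> cls T a" and hb: "b \<in> cls T b" using assms by (auto intro: ueq_refl)
  have "(\<Union>a'\<in>cls T a. \<Union>b'\<in>cls T b. U_eq T `` {a' @ b'}) = cls T (a @ b)"
  proof (rule equalityI)
    show "(\<Union>a'\<in>cls T a. \<Union>b'\<in>cls T b. U_eq T `` {a' @ b'}) \<subseteq> cls T (a @ b)"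
      using h by blast
    show "cls T (a @ b) \<subseteq> (\<Union>a'\<in>cls T a. \<Union>b'\<in>cls T b. U_eq T `` {a' @ b'})"
      using ha hb by blast
  qed
  then show ?thesis unfolding U_grp_def by simp
qed

definition phi0 :: "'a::ab_group_add set \<Rightarrow> ('a \<times> bool) list set \<Rightarrow> ('a \<times> 'a \<Rightarrow>\<^sub>0 int) set \<times> 'a \<times> int" where
  "phi0 T A = ev (SOME w. w \<in> A)"

lemma W_carrier: "carrier (W_grp T) = generate amb_grp (carrier amb_grp \<inter> W_gen ` T)"
  by (simp add: W_grp_def subgroup_generated_def)
lemma W_mult: "x \<otimes>\<^bsub>W_grp T\<^esub> y = x \<otimes>\<^bsub>amb_grp\<^esub> y"
  by (simp add: W_grp_def subgroup_generated_def)

lemma ev_single: "ev [x] = W_gen (fst x)"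
  by (simp add: ev_def W_gen_def wedge_one rcos_zero)

lemma ev_nil: "ev [] = \<one>\<^bsub>amb_grp\<^esub>"
  by (simp add: ev_def amb_grp_def wedge_one rcos_zero)

lemma ev_nil_iff: "ev z = ev [] \<longleftrightarrow> Fw z \<in> NW \<and> Sw z = 0 \<and> even (length z)"
proof -
  have "NW #>\<^bsub>FA\<^esub> Fw z = NW #>\<^bsub>FA\<^esub> 0 \<longleftrightarrow> Fw z \<in> NW" by (simp add: rcos_eq_iff)
  moreover have "((-1::int) ^ length z = 1) \<longleftrightarrow> even (length z)"
    by (cases "even (length z)") auto
  ultimately show ?thesis by (auto simp: ev_def rcos_zero)
qed

context el2
begin

lemma phi0_cls: fixes T :: "'a set" shows "set w \<subseteq> L T \<Longrightarrow> phi0 T (cls T w) = ev w"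
proof -
  assume w: "set w \<subseteq> L T"
  have "w \<in> cls T w" using w by (auto intro: ueq_refl)
  then have "(SOME v. v \<in> cls T w) \<in> cls T w" by (rule someI)
  then have "(w, SOME v. v \<in> cls T w) \<in> U_eq T" by simp
  then show ?thesis unfolding phi0_def using ev_ueq by metis
qed

lemma ev_in_W: fixes T :: "'a set" shows "set w \<subseteq> L T \<Longrightarrow> ev w \<in> carrier (W_grp T)"
proof (induction w)
  case Nil then show ?case by (simp add: W_carrier ev_nil generate.one)
next
  case (Cons x w)
  have "W_gen (fst x) \<in> carrier amb_grp \<inter> W_gen ` T"
  proof
    have "NW \<in> carrier wedge_grp"
      using rcos_in_carrier[of wedge_rels 0] by (simp add: wedge_grp_def rcos_zero)
    then show "W_gen (fst x) \<in> carrier amb_grp" by (simp add: W_gen_def amb_grp_def wedge_one)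
    show "W_gen (fst x) \<in> W_gen ` T" using Cons.prems by auto
  qed
  then have "ev [x] \<otimes>\<^bsub>amb_grp\<^esub> ev w \<in> carrier (W_grp T)"
    using Cons by (auto simp: W_carrier ev_single intro: generate.eng generate.incl)
  then show ?case using amb_mult_ev[of "[x]" w] by simp
qed

lemma phi0_hom: fixes T :: "'a set"
  shows "phi0 T \<in> hom (U_grp T) (W_grp T) \<and> (\<forall>t\<in>T. phi0 T (U_gen T t) = W_gen t)"
proof (intro conjI ballI homI)
  fix A assume "A \<in> carrier (U_grp T)"
  then obtain w where "set w \<subseteq> L T" "A = cls T w" by (rule carrier_U_E)
  then show "phi0 T A \<in> carrier (W_grp T)" using phi0_cls ev_in_W by simp
next
  fix A B assume "A \<in> carrier (U_grp T)" "B \<in> carrier (U_grp T)"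
  then obtain a b where "set a \<subseteq> L T" "A = cls T a" "set b \<subseteq> L T" "B = cls T b"
    by (metis carrier_U_E)
  then show "phi0 T (A \<otimes>\<^bsub>U_grp T\<^esub> B) = phi0 T A \<otimes>\<^bsub>W_grp T\<^esub> phi0 T B"
    by (simp add: cls_mult phi0_cls W_mult amb_mult_ev)
next
  fix t assume "t \<in> T"
  then show "phi0 T (U_gen T t) = W_gen t"
    unfolding U_gen_def using phi0_cls[of "[(t, True)]" T] ev_single[of "(t, True)"] by simp
qed

lemma any_phi:
  fixes T :: "'a set"
  assumes T0: "0 \<in> T" and hom: "\<phi> \<in> hom (U_grp T) (W_grp T)" and gen: "\<forall>t\<in>T. \<phi> (U_gen T t) = W_gen t"
  shows "set w \<subseteq> L T \<Longrightarrow> \<phi> (cls T w) = ev w"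
proof (induction w)
  case Nil
  let ?z = "[(0::'a, True)]"
  have zL: "set ?z \<subseteq> L T" using T0 by auto
  have "cls T [] = cls T (?z @ ?z)"
    using cls_eq_iff[of "[]" T "?z @ ?z"] U_eq.sym[OF rel_sq[OF T0]] zL by auto
  also have "\<dots> = U_gen T 0 \<otimes>\<^bsub>U_grp T\<^esub> U_gen T 0"
    using cls_mult[OF zL zL] by (simp add: U_gen_def)
  finally have "\<phi> (cls T []) = \<phi> (U_gen T 0) \<otimes>\<^bsub>W_grp T\<^esub> \<phi> (U_gen T 0)"
    using hom zL cls_in[OF zL] by (simp add: hom_mult U_gen_def)
  also have "\<dots> = ev ?z \<otimes>\<^bsub>amb_grp\<^esub> ev ?z" using gen T0 by (simp add: W_mult ev_single)
  also have "\<dots> = ev []" using amb_mult_ev[of ?z ?z] ev_ueq[OF rel_sq[OF T0]] by simp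
  finally show ?case .
next
  case (Cons x w)
  obtain t b where x: "x = (t, b)" and t: "t \<in> T" using Cons.prems by (cases x) auto
  have xL: "set [x] \<subseteq> L T" and wL: "set w \<subseteq> L T" using Cons.prems by auto
  have "cls T [x] = U_gen T t"
    unfolding U_gen_def using cls_eq_iff[of "[x]" T "[(t, True)]"] norm_letter[OF t, of b] x t xL by auto
  moreover have "cls T (x # w) = cls T [x] \<otimes>\<^bsub>U_grp T\<^esub> cls T w" using cls_mult[OF xL wL] by simp
  ultimately have "\<phi> (cls T (x # w)) = \<phi> (U_gen T t) \<otimes>\<^bsub>W_grp T\<^esub> \<phi> (cls T w)"
    using hom cls_in[OF xL] cls_in[OF wL] by (simp add: hom_mult)
  also have "\<dots> = ev [x] \<otimes>\<^bsub>amb_grp\<^esub> ev w"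
    using gen t Cons.IH wL ev_single[of x] x by (simp add: W_mult)
  also have "\<dots> = ev (x # w)" using amb_mult_ev[of "[x]" w] by simp
  finally show ?case .
qed

lemma inj_iff:
  fixes T :: "'a set"
  assumes "\<And>w. set w \<subseteq> L T \<Longrightarrow> \<phi> (cls T w) = ev w"
  shows "inj_on \<phi> (carrier (U_grp T)) \<longleftrightarrow>
    (\<forall>w w'. set w \<subseteq> L T \<longrightarrow> set w' \<subseteq> L T \<longrightarrow> ev w = ev w' \<longrightarrow> (w, w') \<in> U_eq T)"
proof
  assume inj: "inj_on \<phi> (carrier (U_grp T))"
  show "\<forall>w w'. set w \<subseteq> L T \<longrightarrow> set w' \<subseteq> L T \<longrightarrow> ev w = ev w' \<longrightarrow> (w, w') \<in> U_eq T"
  proof (intro allI impI)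
    fix w w' assume h: "set w \<subseteq> L T" "set w' \<subseteq> L T" "ev w = ev w'"
    then have "\<phi> (cls T w) = \<phi> (cls T w')" using assms by simp
    then have "cls T w = cls T w'" using inj cls_in h by (metis inj_on_def)
    then show "(w, w') \<in> U_eq T" using cls_eq_iff h by blast
  qed
next
  assume P: "\<forall>w w'. set w \<subseteq> L T \<longrightarrow> set w' \<subseteq> L T \<longrightarrow> ev w = ev w' \<longrightarrow> (w, w') \<in> U_eq T"
  show "inj_on \<phi> (carrier (U_grp T))"
  proof (rule inj_onI)
    fix A B assume A: "A \<in> carrier (U_grp T)" and B: "B \<in> carrier (U_grp T)" and e: "\<phi> A = \<phi> B"
    obtain w where w: "set w \<subseteq> L T" "A = cls T w" using A by (rule carrier_U_E)
    obtain w' where w': "set w' \<subseteq> L T" "B = cls T w'" using B by (rule carrier_U_E)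
    have "ev w = ev w'" using e w w' assms by simp
    then have "(w, w') \<in> U_eq T" using P w w' by blast
    then show "A = B" using w w' cls_eq_iff by blast
  qed
qed

end


lemma tensor_one: "\<one>\<^bsub>tensor_grp\<^esub> = NT" by (simp add: tensor_grp_def)

lemma tensor_comm_monoid: "comm_monoid (tensor_grp :: ('a::ab_group_add \<times> 'a \<Rightarrow>\<^sub>0 int) set monoid)"
  using Mod_comm_group[of tensor_rels] unfolding tensor_grp_def comm_group_def by blast

lemma tensor_elt_carrier: "tensor_elt g h \<in> carrier tensor_grp"
  unfolding tensor_elt_def tensor_grp_def by (rule rcos_in_carrier)

context cs
begin

lemma diag_inj': "tensor_elt (g::'a) g = tensor_elt h h \<Longrightarrow> g = h"
  unfolding tensor_elt_def by (rule diag_inj) (simp add: rcos_eq_iff)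

lemma finprod_diag:
  assumes "finite Os"
  shows "finprod tensor_grp id ((\<lambda>g. tensor_elt g g) ` Os) = NT #>\<^bsub>FA\<^esub> sum (\<lambda>g::'a. fo g g) Os"
proof -
  have "finprod tensor_grp id ((\<lambda>g. tensor_elt g g) ` Os) = finprod tensor_grp (\<lambda>g. id (tensor_elt g g)) Os"
    by (rule comm_monoid.finprod_reindex[OF tensor_comm_monoid])
       (auto simp: tensor_elt_carrier inj_on_def intro: diag_inj')
  also have "\<dots> = NT #>\<^bsub>FA\<^esub> sum (\<lambda>g::'a. fo g g) Os"
    unfolding tensor_grp_def tensor_elt_def id_def by (rule finprod_Mod[OF assms])
  finally show ?thesis .
qed

lemma dep_of_O:
  fixes T :: "'a set"
  assumes "finite Os" "Os \<subseteq> T" "sum (\<lambda>g. fo g g) Os \<in> NT" "Os - {0} \<noteq> {}"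
  shows "two_dependent (T - {0})"
  unfolding two_dependent_def
proof (intro exI conjI)
  let ?F = "(\<lambda>g. tensor_elt g g) ` (Os - {0})"
  show "finite ?F" using assms(1) by simp
  show "?F \<noteq> {}" using assms(4) by simp
  show "?F \<subseteq> (\<lambda>g. tensor_elt g g) ` (T - {0})" using assms(2) by auto
  have s: "sum (\<lambda>g. fo g g) (Os - {0}) \<in> NT"
    using assms(1,3) NT_zero_l[of 0] by (auto simp: sum_diff1 intro: gen_diff)
  have "finprod tensor_grp id ?F = NT #>\<^bsub>FA\<^esub> sum (\<lambda>g. fo g g) (Os - {0})"
    using finprod_diag assms(1) by simp
  also have "\<dots> = NT #>\<^bsub>FA\<^esub> 0" using s by (simp add: rcos_eq_iff)
  also have "\<dots> = \<one>\<^bsub>tensor_grp\<^esub>" by (simp add: tensor_one rcos_zero)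
  finally show "finprod tensor_grp id ?F = \<one>\<^bsub>tensor_grp\<^esub>" .
qed

lemma Cw_self_NT: "Sw z = 0 \<Longrightarrow> Cw z z \<in> NT"
  using gen_add[OF Cw_bilin[of z z] NT_zero_l[of 0]] by simp

lemma core1:
  fixes T :: "'a set"
  assumes ind: "two_independent (T - {0})"
    and w: "set w \<subseteq> L T" and w': "set w' \<subseteq> L T" and e: "ev w = ev w'"
  shows "(w, w') \<in> U_eq T"
proof -
  let ?z = "w @ w'"
  have zL: "set ?z \<subseteq> L T" using w w' by auto
  have "ev ?z = ev w \<otimes>\<^bsub>amb_grp\<^esub> ev w'" by (rule amb_mult_ev[symmetric])
  also have "\<dots> = ev w \<otimes>\<^bsub>amb_grp\<^esub> ev w" using e by simp
  also have "\<dots> = ev (w @ w)" by (rule amb_mult_ev)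
  also have "\<dots> = ev []" using ev_ueq[OF self_append_nil[OF w]] .
  finally have ez: "ev ?z = ev []" .
  obtain z' where z': "(?z, z') \<in> U_eq T" "distinct (map fst z')" "set z' \<subseteq> L T"
    using reduce[OF zL] by blast
  have ez': "ev z' = ev []" using ez ev_ueq[OF z'(1)] by simp
  have "z' = []"
  proof (rule ccontr)
    assume ne: "z' \<noteq> []"
    from ez' have F: "Fw z' \<in> NW" and S: "Sw z' = 0" and L: "even (length z')"
      by (auto simp: ev_nil_iff)
    have "Dw z' = Cw z' z' - sig (Fw z')" using sig_Fw[of z'] by (simp add: algebra_simps)
    then have D: "Dw z' \<in> NT" using Cw_self_NT[OF S] sig_NW[OF F] by (simp add: gen_diff)
    let ?Os = "set (map fst z')"
    have sO: "sum (\<lambda>g. fo g g) ?Os = Dw z'"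
      unfolding Dw_def using sum_list_distinct_conv_sum_set[OF z'(2), of "\<lambda>g. fo g g"]
      by (simp add: comp_def)
    have cO: "card ?Os = length z'" using distinct_card[OF z'(2)] by simp
    have "?Os - {0} \<noteq> {}"
    proof
      assume "?Os - {0} = {}"
      then have "?Os \<subseteq> {0}" by auto
      then have "card ?Os \<le> 1" using card_mono[of "{0}" ?Os] by simp
      moreover have "length z' \<noteq> 0" using ne by simp
      ultimately show False using cO L by presburger
    qed
    moreover have "?Os \<subseteq> T" using z'(3) by auto
    ultimately have "two_dependent (T - {0})" using dep_of_O[of ?Os T] sO D by simp
    then show False using ind by (simp add: two_independent_def)
  qed
  then have zn: "(?z, []) \<in> U_eq T" using z'(1) by simp
  have 1: "(w, w @ (w' @ w')) \<in> U_eq T"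
    using U_eq.sym[OF ueq_ctx_l[OF self_append_nil[OF w'] w]] by simp
  have 2: "((w @ w') @ w', [] @ w') \<in> U_eq T" using ueq_ctx_r[OF zn w'] .
  show ?thesis using U_eq.trans[OF 1] 2 by simp
qed

lemma core2:
  fixes T :: "'a set"
  assumes T0: "0 \<in> T"
    and P: "\<forall>w w'. set w \<subseteq> L T \<longrightarrow> set w' \<subseteq> L T \<longrightarrow> ev w = ev w' \<longrightarrow> (w, w') \<in> U_eq T"
  shows "two_independent (T - {0})"
  unfolding two_independent_def
proof
  assume "two_dependent (T - {0})"
  then obtain F where F: "finite F" "F \<noteq> {}" "F \<subseteq> (\<lambda>g. tensor_elt g g) ` (T - {0})"
    "finprod tensor_grp id F = \<one>\<^bsub>tensor_grp\<^esub>"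
    unfolding two_dependent_def by blast
  define pick where "pick f = (SOME g. g \<in> T - {0} \<and> tensor_elt g g = f)" for f
  have pick: "pick f \<in> T - {0} \<and> tensor_elt (pick f) (pick f) = f" if fF: "f \<in> F" for f
  proof -
    obtain g where "g \<in> T - {0}" "f = tensor_elt g g" using F(3) fF by blast
    then show ?thesis unfolding pick_def by (metis (mono_tags, lifting) someI)
  qed
  define Os where "Os = pick ` F"
  have fO: "finite Os" using F(1) by (simp add: Os_def)
  have OT: "Os \<subseteq> T - {0}" using pick by (auto simp: Os_def)
  have FO: "F = (\<lambda>g. tensor_elt g g) ` Os"
  proof -
    have "(\<lambda>f. tensor_elt (pick f) (pick f)) ` F = (\<lambda>f. f) ` F"
      by (rule image_cong) (use pick in auto)
    then show ?thesis unfolding Os_def image_image by simp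
  qed
  have "NT #>\<^bsub>FA\<^esub> sum (\<lambda>g. fo g g) Os = NT #>\<^bsub>FA\<^esub> 0"
    using F(4) finprod_diag[OF fO] FO by (simp add: tensor_one rcos_zero)
  then have sO: "sum (\<lambda>g. fo g g) Os \<in> NT" by (simp add: rcos_eq_iff)
  define Os' where "Os' = (if even (card Os) then Os else insert 0 Os)"
  have fO': "finite Os'" using fO by (simp add: Os'_def)
  have Os'T: "Os' \<subseteq> T" using OT T0 by (auto simp: Os'_def)
  have 0: "0 \<notin> Os" using OT by auto
  have cO': "even (card Os')" using fO 0 by (simp add: Os'_def)
  have sO': "sum (\<lambda>g. fo g g) Os' \<in> NT"
    using sO fO 0 NT_zero_l[of 0] by (auto simp: Os'_def intro: gen_add)
  have neO': "Os' \<noteq> {}" using F(2) by (auto simp: Os'_def Os_def)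
  obtain xs where xs: "set xs = Os'" "distinct xs" using finite_distinct_list[OF fO'] by blast
  define z where "z = map (\<lambda>g. (g, True)) xs"
  have zL: "set z \<subseteq> L T" using xs Os'T by (auto simp: z_def)
  have Dz: "Dw z \<in> NT"
    using sO' sum_list_distinct_conv_sum_set[OF xs(2), of "\<lambda>g. fo g g"] xs(1)
    by (simp add: Dw_def z_def comp_def)
  have Sz: "Sw z = 0"
    unfolding Sw_def by (rule sum_zero_of_diag) (use Dz in \<open>simp add: Dw_def\<close>)
  have "sig (Fw z) = Cw z z - Dw z" using sig_Fw[of z] by (simp add: algebra_simps)
  then have "sig (Fw z) \<in> NT" using Cw_self_NT[OF Sz] Dz by (simp add: gen_diff)
  then have Fz: "Fw z \<in> NW" by (rule NW_of_sig)
  have Lz: "even (length z)" using cO' xs distinct_card[OF xs(2)] by (simp add: z_def)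
  have "ev z = ev []" using Fz Sz Lz by (simp add: ev_nil_iff)
  then have zn: "(z, []) \<in> U_eq T" using P zL by auto
  obtain y ys where xs': "xs = y # ys" using neO' xs(1) by (cases xs) auto
  have yn: "y \<notin> set ys" using xs(2) xs' by simp
  have "filter (\<lambda>x. x = y) ys = []" using yn by (auto simp: filter_empty_conv)
  then have "cnt z y = 1"
    using xs' by (simp add: cnt_def z_def filter_map comp_def)
  moreover have "cnt [] y = 0" by (simp add: cnt_def)
  ultimately show False using parity_inv[OF zn, of y] by simp
qed

end

lemma (in el2) core:
  fixes T :: "'a set"
  assumes "0 \<in> T"
  shows "(\<forall>w w'. set w \<subseteq> L T \<longrightarrow> set w' \<subseteq> L T \<longrightarrow> ev w = ev w' \<longrightarrow> (w, w') \<in> U_eq T)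
     \<longleftrightarrow> two_independent (T - {0})"
proof -
  obtain c :: "'a \<Rightarrow> 'a \<Rightarrow> bool" where c: "\<And>b g h. c b (g + h) = (c b g \<noteq> c b h)"
    "\<And>g. finite {b. c b g}" "\<And>g. g = sum (\<lambda>b. b) {b. c b g}"
    using coords_exist by metis
  obtain r :: "'a rel" where r0: "Well_order r \<and> Field r = UNIV"
    using Zorn.well_ordering[where 'a='a] by (elim exE)
  have r: "Well_order r" "Field r = UNIV" using r0 by auto
  define lt where "lt x y = ((x, y) \<in> r \<and> x \<noteq> y)" for x y
  have "linear_order_on (Field r) r" using r(1) by (simp add: well_order_on_def)
  then have lin: "linear_order_on UNIV r" using r(2) by simp
  have tot: "x \<noteq> y \<Longrightarrow> (x, y) \<in> r \<or> (y, x) \<in> r" for x y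
    using lin unfolding linear_order_on_def total_on_def by blast
  have ant: "(x, y) \<in> r \<Longrightarrow> (y, x) \<in> r \<Longrightarrow> x = y" for x y
    using lin unfolding linear_order_on_def partial_order_on_def antisym_def by blast
  have I: "cs c lt"
  proof (rule cs.intro)
    show "el2 TYPE('a)" by (rule el2_axioms)
    show "cs_axioms c lt"
    proof (rule cs_axioms.intro)
      show "\<And>b g h. c b (g + h) = (c b g \<noteq> c b h)" by (rule c(1))
      show "\<And>g. finite {b. c b g}" by (rule c(2))
      show "\<And>g. g = sum (\<lambda>b. b) {b. c b g}" by (rule c(3))
      show "\<And>x. \<not> lt x x" by (simp add: lt_def)
      show "\<And>x y. lt x y \<Longrightarrow> \<not> lt y x" unfolding lt_def using ant by blast
      show "\<And>x y. x \<noteq> y \<Longrightarrow> lt x y \<or> lt y x" unfolding lt_def using tot by blast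
    qed
  qed
  interpret C: cs c lt by (rule I)
  show ?thesis
  proof
    assume P: "\<forall>w w'. set w \<subseteq> L T \<longrightarrow> set w' \<subseteq> L T \<longrightarrow> ev w = ev w' \<longrightarrow> (w, w') \<in> U_eq T"
    show "two_independent (T - {0})" by (rule C.core2[OF assms P])
  next
    assume ind: "two_independent (T - {0})"
    show "\<forall>w w'. set w \<subseteq> L T \<longrightarrow> set w' \<subseteq> L T \<longrightarrow> ev w = ev w' \<longrightarrow> (w, w') \<in> U_eq T"
      using C.core1[OF ind] by blast
  qed
qed

theorem theorem4p4:
  fixes T :: "'a::ab_group_add set"
  assumes "elementary_abelian_2 TYPE('a)"
    and "add_span T = UNIV"
    and "0 \<in> T"
  shows "(\<exists>\<phi>. \<phi> \<in> hom (U_grp T) (W_grp T) \<and> (\<forall>t\<in>T. \<phi> (U_gen T t) = W_gen t)) \<and>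
         (\<forall>\<phi>. \<phi> \<in> hom (U_grp T) (W_grp T) \<and> (\<forall>t\<in>T. \<phi> (U_gen T t) = W_gen t) \<longrightarrow>
           (inj_on \<phi> (carrier (U_grp T)) \<longleftrightarrow> two_independent (T - {0})))"
proof -
  have e2: "el2 TYPE('a)"
    using assms(1) unfolding elementary_abelian_2_def by (intro el2.intro) blast
  interpret E: el2 "TYPE('a)" by (rule e2)
  have A: "\<exists>\<phi>. \<phi> \<in> hom (U_grp T) (W_grp T) \<and> (\<forall>t\<in>T. \<phi> (U_gen T t) = W_gen t)"
    using E.phi0_hom[of T] by (intro exI[of _ "phi0 T"])
  have B: "\<forall>\<phi>. \<phi> \<in> hom (U_grp T) (W_grp T) \<and> (\<forall>t\<in>T. \<phi> (U_gen T t) = W_gen t) \<longrightarrow>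
           (inj_on \<phi> (carrier (U_grp T)) \<longleftrightarrow> two_independent (T - {0}))"
  proof (intro allI impI)
    fix \<phi> assume h: "\<phi> \<in> hom (U_grp T) (W_grp T) \<and> (\<forall>t\<in>T. \<phi> (U_gen T t) = W_gen t)"
    have cl: "\<And>w. set w \<subseteq> L T \<Longrightarrow> \<phi> (cls T w) = ev w"
      using E.any_phi[OF assms(3)] h by blast
    show "inj_on \<phi> (carrier (U_grp T)) \<longleftrightarrow> two_independent (T - {0})"
      using E.inj_iff[OF cl] E.core[OF assms(3)] by simp
  qed
  show ?thesis by (rule conjI[OF A B])
qed

end
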